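(* Let $x_1,\dots,x_n$ be independent random variables in $[0,1]$ with $\mathbb{E}[x_i]\le\nu$ for all $i$, for some $\nu\in[0,1]$. For any $c\ge1$ with $c\nu<1$ and any $\lambda\in\big[0,\frac{\ln c}{(1-c\nu)(4n-3)}\big]$, $$\mathbb{E}\exp\big(\lambda(x_1+\dots+x_n)^2\big)\le\exp\big(\lambda cn\nu(1+cn\nu)\big).$$ *)

theory Defs
  imports "HOL-Probability.Probability"
begin

end

theory Submission
  imports Defs
begin

lemma key_ineq:
  fixes \<nu> c t :: real
  assumes "0 \<le> \<nu>" "1 \<le> c" "c * \<nu> < 1" "0 \<le> t" "t \<le> ln c / (1 - c * \<nu>)"
  shows "1 + \<nu> * (exp t - 1) \<le> exp (c * \<nu> * t)"
proof -
  define q where "q = c * \<nu>"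
  have q: "0 \<le> q" "q < 1" using assms by (auto simp: q_def)
  define F where "F = (\<lambda>s. exp (q * s) - \<nu> * exp s)"
  have "F 0 \<le> F t"
  proof (rule DERIV_nonneg_imp_increasing_open[of 0 t F])
    show "0 \<le> t" by fact
    show "continuous_on {0..t} F" unfolding F_def by (intro continuous_intros)
    fix s assume s: "0 < s" "s < t"
    have D: "(F has_real_derivative (q * exp (q * s) - \<nu> * exp s)) (at s)"
      unfolding F_def by (auto intro!: derivative_eq_intros)
    have "(1 - q) * s \<le> (1 - q) * t" using s q by (intro mult_left_mono) auto
    also have "(1 - q) * t \<le> ln c" using assms(5) q by (simp add: q_def field_simps)
    finally have "exp ((1 - q) * s) \<le> c"
      using assms(2) by (metis exp_le_cancel_iff exp_ln less_le_trans zero_less_one)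
    hence "\<nu> * exp ((1 - q) * s) \<le> \<nu> * c" using assms(1) by (rule mult_left_mono)
    hence "\<nu> * exp ((1 - q) * s) * exp (q * s) \<le> q * exp (q * s)"
      by (intro mult_right_mono) (auto simp: q_def mult.commute)
    moreover have "exp ((1 - q) * s) * exp (q * s) = exp s"
      by (simp add: exp_add[symmetric] algebra_simps)
    ultimately have "0 \<le> q * exp (q * s) - \<nu> * exp s" by (simp add: mult.assoc)
    with D show "\<exists>y. DERIV F s :> y \<and> 0 \<le> y" by blast
  qed
  thus ?thesis by (simp add: F_def q_def algebra_simps)
qed

lemma exp_convex_bound:
  fixes x T :: real
  assumes "0 \<le> x" "x \<le> 1"
  shows "exp (x * T) \<le> 1 + x * (exp T - 1)"
proof -
  have "exp ((1 - x) *\<^sub>R 0 + x *\<^sub>R T) \<le> (1 - x) * exp 0 + x * exp T"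
    using assms by (intro convex_onD[OF exp_convex]) auto
  thus ?thesis by (simp add: algebra_simps)
qed

lemma sum_aux: "(\<Sum>j<m. (real n - real (Suc j))) = real m * real n - real m * (real m + 1) / 2"
  by (induction m) (auto simp: field_simps)

lemma (in prob_space) integrable_cont_comp:
  fixes f :: "real \<Rightarrow> real"
  assumes "continuous_on UNIV f" "Y \<in> borel_measurable M" "\<And>\<omega>. \<omega> \<in> space M \<Longrightarrow> Y \<omega> \<in> {0..K}"
  shows "integrable M (\<lambda>\<omega>. f (Y \<omega>))"
proof -
  have "compact (f ` {0..K})"
    by (rule compact_continuous_image) (use assms(1) continuous_on_subset in auto)
  then obtain B where B: "\<And>y. y \<in> f ` {0..K} \<Longrightarrow> norm y \<le> B"
    using compact_imp_bounded bounded_iff by metis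
  show ?thesis
  proof (rule integrable_const_bound[where B=B])
    show "AE \<omega> in M. norm (f (Y \<omega>)) \<le> B" using B assms(3) by (auto intro!: AE_I2)
    show "(\<lambda>\<omega>. f (Y \<omega>)) \<in> borel_measurable M"
      using measurable_compose[OF assms(2) borel_measurable_continuous_onI[OF assms(1)]] by simp
  qed
qed

theorem lemma4:
  fixes M :: "'a measure" and x :: "nat \<Rightarrow> 'a \<Rightarrow> real"
    and n :: nat and \<nu> c l :: real
  assumes "prob_space M"
    and "prob_space.indep_vars M (\<lambda>_. borel) x {..<n}"
    and "\<And>i. i < n \<Longrightarrow> x i \<in> borel_measurable M"
    and "\<And>i \<omega>. i < n \<Longrightarrow> \<omega> \<in> space M \<Longrightarrow> 0 \<le> x i \<omega> \<and> x i \<omega> \<le> 1"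
    and "\<And>i. i < n \<Longrightarrow> prob_space.expectation M (x i) \<le> \<nu>"
    and "0 \<le> \<nu>" and "\<nu> \<le> 1"
    and "1 \<le> c" and "c * \<nu> < 1"
    and "0 \<le> l" and "l \<le> ln c / ((1 - c * \<nu>) * (4 * real n - 3))"
  shows "prob_space.expectation M (\<lambda>\<omega>. exp (l * (\<Sum>i<n. x i \<omega>)^2))
           \<le> exp (l * c * real n * \<nu> * (1 + c * real n * \<nu>))"
proof -
  interpret prob_space M by fact
  show ?thesis
  proof (cases "n = 0")
    case True
    then show ?thesis by simp
  next
    case False
    hence n1: "1 \<le> n" by simp
    define q where "q = c * \<nu>"
    have q0: "0 \<le> q" and q1: "q < 1"
      using assms(6,8,9) by (auto simp: q_def)
    define S where "S = (\<lambda>k \<omega>. \<Sum>i<k. x i \<omega>)"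
    define a where "a = (\<lambda>k. 2 * q * l * (real n - real k))"
    define Q where "Q = (\<lambda>k. expectation (\<lambda>\<omega>. exp (l * (S k \<omega>)^2 + a k * S k \<omega>)))"
    have Smeas: "S k \<in> borel_measurable M" if "k \<le> n" for k
      unfolding S_def by (intro borel_measurable_sum) (use assms(3) that in auto)
    have Sb: "0 \<le> S k \<omega> \<and> S k \<omega> \<le> real k" if "k \<le> n" "\<omega> \<in> space M" for k \<omega>
    proof
      show "0 \<le> S k \<omega>" unfolding S_def using assms(4) that by (intro sum_nonneg) auto
      have "S k \<omega> \<le> real (card {..<k}) * 1" unfolding S_def
        using assms(4) that by (intro sum_bounded_above) auto
      thus "S k \<omega> \<le> real k" by simp
    qed
    have lbound: "l * (2 * real n - 1) \<le> ln c / (1 - q)"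
    proof -
      have D: "0 < (1 - q) * (4 * real n - 3)" using q1 n1 by simp
      have "l * ((1 - q) * (4 * real n - 3)) \<le> ln c"
        using assms(11) D by (simp add: q_def pos_le_divide_eq)
      hence "l * (4 * real n - 3) \<le> ln c / (1 - q)"
        using q1 by (simp add: pos_le_divide_eq mult_ac)
      moreover have "l * (2 * real n - 1) \<le> l * (4 * real n - 3)"
        using n1 assms(10) by (intro mult_left_mono) auto
      ultimately show ?thesis by linarith
    qed
    have step: "Q (Suc k) \<le> Q k * exp (q * (l + a (Suc k)))" if k: "k < n" for k
    proof -
      define b where "b = a (Suc k)"
      have b0: "0 \<le> b" using k q0 assms(10) by (simp add: b_def a_def)
      have akb: "a k = b + 2 * q * l" by (simp add: a_def b_def algebra_simps)
      define g where "g = (\<lambda>s. exp (l * s^2 + b * s))"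
      define T where "T = (\<lambda>s. 2 * l * s + l + b)"
      define H where "H = (\<lambda>s. g s * (exp (T s) - 1))"
      have contg: "continuous_on UNIV g" unfolding g_def by (intro continuous_intros)
      have contH: "continuous_on UNIV H" unfolding H_def g_def T_def by (intro continuous_intros)
      have Sk: "S k \<in> borel_measurable M" using Smeas k by simp
      have SkB: "\<And>\<omega>. \<omega> \<in> space M \<Longrightarrow> S k \<omega> \<in> {0..real k}" using Sb k by auto
      have SSuc: "S (Suc k) \<omega> = S k \<omega> + x k \<omega>" for \<omega> by (simp add: S_def)
      have xk: "\<And>\<omega>. \<omega> \<in> space M \<Longrightarrow> 0 \<le> x k \<omega> \<and> x k \<omega> \<le> 1" using assms(4) k by auto
      have xkm: "x k \<in> borel_measurable M" using assms(3) k by simp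
      have int_xk: "integrable M (x k)"
        by (rule integrable_const_bound[where B=1]) (use xk xkm in \<open>auto intro!: AE_I2\<close>)
      have int_g: "integrable M (\<lambda>\<omega>. g (S k \<omega>))"
        by (rule integrable_cont_comp[OF contg Sk SkB])
      have int_H: "integrable M (\<lambda>\<omega>. H (S k \<omega>))"
        by (rule integrable_cont_comp[OF contH Sk SkB])
      have ind0: "indep_var borel (x k) borel (\<lambda>\<omega>. \<Sum>i\<in>{..<k}. x i \<omega>)"
        by (rule indep_vars_sum) (use k in \<open>auto intro!: indep_vars_subset[OF assms(2)]\<close>)
      have Hm: "H \<in> borel_measurable borel" by (rule borel_measurable_continuous_onI[OF contH])
      have ind: "indep_var borel (id \<circ> x k) borel (H \<circ> (\<lambda>\<omega>. \<Sum>i\<in>{..<k}. x i \<omega>))"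
        by (rule indep_var_compose[OF ind0]) (auto simp: Hm)
      have ind': "indep_var borel (x k) borel (\<lambda>\<omega>. H (S k \<omega>))"
        using ind by (simp add: S_def comp_def)
      have int_prod: "integrable M (\<lambda>\<omega>. x k \<omega> * H (S k \<omega>))"
        by (rule indep_var_integrable[OF ind' int_xk int_H])
      have eq_prod: "expectation (\<lambda>\<omega>. x k \<omega> * H (S k \<omega>)) = expectation (x k) * expectation (\<lambda>\<omega>. H (S k \<omega>))"
        by (rule indep_var_lebesgue_integral[OF ind' int_xk int_H])
      have T0: "0 \<le> T (S k \<omega>)" if "\<omega> \<in> space M" for \<omega>
        using SkB[OF that] b0 assms(10) by (simp add: T_def)
      have Tle: "T (S k \<omega>) \<le> ln c / (1 - q)" if "\<omega> \<in> space M" for \<omega>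
      proof -
        have s: "0 \<le> S k \<omega>" "S k \<omega> \<le> real k" using SkB[OF that] by auto
        have "T (S k \<omega>) \<le> 2 * l * real k + l + b"
          using s assms(10) by (simp add: T_def mult_left_mono)
        also have "b \<le> 2 * l * (real n - real (Suc k))"
        proof -
          have "0 \<le> 2 * l * (real n - real (Suc k))" using assms(10) k by simp
          hence "q * (2 * l * (real n - real (Suc k))) \<le> 1 * (2 * l * (real n - real (Suc k)))"
            using q1 by (intro mult_right_mono) auto
          thus ?thesis by (simp add: b_def a_def algebra_simps)
        qed
        hence "2 * l * real k + l + b \<le> l * (2 * real n - 1)"
          by (simp add: algebra_simps)
        finally show ?thesis using lbound by linarith
      qed
      have H0: "0 \<le> H (S k \<omega>)" if "\<omega> \<in> space M" for \<omega>
        using T0[OF that] by (simp add: H_def g_def)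
      have int_lhs: "integrable M (\<lambda>\<omega>. exp (l * (S (Suc k) \<omega>)^2 + a (Suc k) * S (Suc k) \<omega>))"
      proof -
        have "continuous_on UNIV (\<lambda>s. exp (l * s^2 + a (Suc k) * s))" by (intro continuous_intros)
        moreover have "S (Suc k) \<in> borel_measurable M" using Smeas k by simp
        moreover have "\<And>\<omega>. \<omega> \<in> space M \<Longrightarrow> S (Suc k) \<omega> \<in> {0..real (Suc k)}" using Sb[of "Suc k"] k by auto
        ultimately show ?thesis by (rule integrable_cont_comp)
      qed
      have int_fin: "integrable M (\<lambda>\<omega>. exp (l * (S k \<omega>)^2 + a k * S k \<omega>))"
      proof -
        have "continuous_on UNIV (\<lambda>s. exp (l * s^2 + a k * s))" by (intro continuous_intros)
        then show ?thesis using Sk SkB by (rule integrable_cont_comp)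
      qed
      have "Q (Suc k) \<le> expectation (\<lambda>\<omega>. g (S k \<omega>) + x k \<omega> * H (S k \<omega>))"
        unfolding Q_def
      proof (rule integral_mono[OF int_lhs])
        show "integrable M (\<lambda>\<omega>. g (S k \<omega>) + x k \<omega> * H (S k \<omega>))"
          using int_g int_prod by simp
        fix \<omega> assume \<omega>: "\<omega> \<in> space M"
        define s where "s = S k \<omega>"
        define y where "y = x k \<omega>"
        have y: "0 \<le> y" "y \<le> 1" using xk[OF \<omega>] by (auto simp: y_def)
        have "l * y^2 \<le> l * y" using y assms(10) by (intro mult_left_mono) (auto simp: power2_eq_square mult_left_le)
        hence "l * (s + y)^2 + b * (s + y) \<le> (l * s^2 + b * s) + y * T s"
          by (simp add: T_def power2_eq_square algebra_simps)
        hence "exp (l * (s + y)^2 + b * (s + y)) \<le> g s * exp (y * T s)"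
          by (simp add: g_def exp_add[symmetric])
        also have "\<dots> \<le> g s * (1 + y * (exp (T s) - 1))"
          by (intro mult_left_mono exp_convex_bound y) (simp add: g_def)
        also have "\<dots> = g s + y * H s" by (simp add: H_def algebra_simps)
        finally show "exp (l * (S (Suc k) \<omega>)^2 + a (Suc k) * S (Suc k) \<omega>) \<le> g (S k \<omega>) + x k \<omega> * H (S k \<omega>)"
          by (simp add: SSuc s_def y_def b_def)
      qed
      also have "\<dots> = expectation (\<lambda>\<omega>. g (S k \<omega>)) + expectation (x k) * expectation (\<lambda>\<omega>. H (S k \<omega>))"
        using int_g int_prod eq_prod by simp
      also have "\<dots> \<le> expectation (\<lambda>\<omega>. g (S k \<omega>)) + \<nu> * expectation (\<lambda>\<omega>. H (S k \<omega>))"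
      proof -
        have "0 \<le> expectation (\<lambda>\<omega>. H (S k \<omega>))" using H0 by (intro integral_nonneg_AE AE_I2) auto
        thus ?thesis using assms(5)[OF k] by (simp add: mult_right_mono)
      qed
      also have "\<dots> = expectation (\<lambda>\<omega>. g (S k \<omega>) + \<nu> * H (S k \<omega>))"
        using int_g int_H by simp
      also have "\<dots> \<le> expectation (\<lambda>\<omega>. exp (l * (S k \<omega>)^2 + a k * S k \<omega>) * exp (q * (l + a (Suc k))))"
      proof (rule integral_mono)
        show "integrable M (\<lambda>\<omega>. g (S k \<omega>) + \<nu> * H (S k \<omega>))" using int_g int_H by simp
        show "integrable M (\<lambda>\<omega>. exp (l * (S k \<omega>)^2 + a k * S k \<omega>) * exp (q * (l + a (Suc k))))"
          using int_fin by simp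
        fix \<omega> assume \<omega>: "\<omega> \<in> space M"
        define s where "s = S k \<omega>"
        have "1 + \<nu> * (exp (T s) - 1) \<le> exp (c * \<nu> * T s)"
          using key_ineq[OF assms(6,8,9) T0[OF \<omega>]] Tle[OF \<omega>] by (simp add: s_def q_def)
        hence "g s * (1 + \<nu> * (exp (T s) - 1)) \<le> g s * exp (q * T s)"
          by (intro mult_left_mono) (auto simp: g_def q_def)
        also have "g s * exp (q * T s) = exp (l * s^2 + a k * s) * exp (q * (l + a (Suc k)))"
          by (simp add: g_def T_def akb b_def exp_add[symmetric] algebra_simps)
        finally show "g (S k \<omega>) + \<nu> * H (S k \<omega>) \<le> exp (l * (S k \<omega>)^2 + a k * S k \<omega>) * exp (q * (l + a (Suc k)))"
          by (simp add: s_def H_def algebra_simps)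
      qed
      also have "\<dots> = Q k * exp (q * (l + a (Suc k)))" by (simp add: Q_def)
      finally show ?thesis .
    qed
    have iter: "k \<le> n \<Longrightarrow> Q k \<le> exp (\<Sum>j<k. q * (l + a (Suc j)))" for k
    proof (induction k)
      case 0
      show ?case by (simp add: Q_def S_def prob_space)
    next
      case (Suc k)
      hence "Q (Suc k) \<le> Q k * exp (q * (l + a (Suc k)))" by (intro step) simp
      also have "\<dots> \<le> exp (\<Sum>j<k. q * (l + a (Suc j))) * exp (q * (l + a (Suc k)))"
        using Suc by (intro mult_right_mono) auto
      also have "\<dots> = exp (\<Sum>j<Suc k. q * (l + a (Suc j)))" by (simp add: exp_add)
      finally show ?case .
    qed
    have "(\<Sum>j<n. q * (l + a (Suc j))) = (\<Sum>j<n. q * l + 2 * q * q * l * (real n - real (Suc j)))"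
      by (intro sum.cong) (auto simp: a_def algebra_simps)
    also have "\<dots> = q * l * real n + 2 * q * q * l * (\<Sum>j<n. (real n - real (Suc j)))"
      by (simp add: sum.distrib sum_distrib_left)
    also have "\<dots> = q * l * real n + q * q * l * (real n * real n - real n)"
      unfolding sum_aux by (simp add: field_simps)
    also have "\<dots> \<le> l * c * real n * \<nu> * (1 + c * real n * \<nu>)"
    proof -
      have "0 \<le> q * q * l * real n" using q0 assms(10) by simp
      thus ?thesis by (simp add: q_def algebra_simps)
    qed
    finally have sumle: "(\<Sum>j<n. q * (l + a (Suc j))) \<le> l * c * real n * \<nu> * (1 + c * real n * \<nu>)" .
    have "Q n = expectation (\<lambda>\<omega>. exp (l * (\<Sum>i<n. x i \<omega>)^2))"
      by (simp add: Q_def S_def a_def)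
    then show ?thesis using iter[of n] sumle by (metis exp_le_cancel_iff order.trans order.refl)
  qed
qed

end
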